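(* Let $\mathcal{D}\subset\mathbb{R}^n$ be a parameter set, let $X$ and $Y$ be finite-dimensional real Hilbert spaces with norms $\|\cdot\|_X$, $\|\cdot\|_Y$, and for each $\mu\in\mathcal{D}$ let $m(\cdot,\cdot;\mu):X\times X\to\mathbb{R}$, $a(\cdot,\cdot;\mu):X\times X\to\mathbb{R}$, $b(\cdot,\cdot;\mu):X\times Y\to\mathbb{R}$ be bilinear forms such that $m(\cdot,\cdot;\mu)$ is symmetric with $m(v,v;\mu)>0$ for all $0\neq v\in X$, $a(\cdot,\cdot;\mu)$ is symmetric, and \[ \gamma_m(\mu)=\sup_{u\in X}\sup_{v\in X}\frac{m(u,v;\mu)}{\|u\|_X\|v\|_X}<\infty,\quad \gamma_a(\mu)=\sup_{u\in X}\sup_{v\in X}\frac{a(u,v;\mu)}{\|u\|_X\|v\|_X}<\infty, \] \[ \alpha_a(\mu)=\inf_{v\in X}\frac{a(v,v;\mu)}{\|v\|_X^2}>0,\qquad \beta(\mu)=\inf_{q\in Y}\sup_{v\in X}\frac{b(v,q;\mu)}{\|q\|_Y\|v\|_X}>0 . \] Let $K\in\mathbb{N}$, $\Delta t>0$, $\mathbb{K}=\{1,\dots,K\}$, and for each $k\in\mathbb{K}$ and $\mu\in\mathcal{D}$ let $f^k(\cdot;\mu)\in X'$, $g^k(\cdot;\mu)\in Y'$. Let the truth solution $u^k(\mu)\in X$, $p^k(\mu)\in Y$, $k\in\mathbb{K}$, be defined by $u^0(\mu)=0$ and, for $k\in\mathbb{K}$, \[ \tfrac{1}{\Delta t}m(u^k(\mu)-u^{k-1}(\mu),v;\mu)+a(u^k(\mu),v;\mu)+b(v,p^k(\mu);\mu)=f^k(v;\mu)\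 \ \forall v\in X,\qquad b(u^k(\mu),q;\mu)=g^k(q;\mu)\ \ \forall q\in Y. \] Let $X_N\subset X$, $Y_N\subset Y$, $N\in\{1,\dots,N_{\max}\}$, be subspaces such that for every $\mu\in\mathcal{D}$ there exist $u^k_N(\mu)\in X_N$, $p^k_N(\mu)\in Y_N$, $k\in\mathbb{K}$, with $u^0_N(\mu)=0$ and, for $k\in\mathbb{K}$, \[ \tfrac{1}{\Delta t}m(u^k_N(\mu)-u^{k-1}_N(\mu),v_N;\mu)+a(u^k_N(\mu),v_N;\mu)+b(v_N,p^k_N(\mu);\mu)=f^k(v_N;\mu)\ \ \forall v_N\in X_N, \] \[ b(u^k_N(\mu),q_N;\mu)=g^k(q_N;\mu)\ \ \forall q_N\in Y_N. \] Define the residuals $r^{1,k}_N(v;\mu)=f^k(v;\mu)-\tfrac{1}{\Delta t}m(u^k_N(\mu)-u^{k-1}_N(\mu),v;\mu)-a(u^k_N(\mu),v;\mu)-b(v,p^k_N(\mu);\mu)$ for $v\in X$ and $r^{2,k}_N(q;\mu)=g^k(q;\mu)-b(u^k_N(\mu),q;\mu)$ for $q\in Y$, and the errors $e^{u,k}_N(\mu)=u^k(\mu)-u^k_N(\mu)$. Let $\mu\in\mathcal{D}$, $N\in\{1,\dots,N_{\max}\}$, $k\in\mathbb{K}$, and let $\alpha_a^{\rm LB}(\mu),\gamma_a^{\rm UB}(\mu),\beta^{\rm LB}(\mu),\gamma_m^{\rm UB}(\mu)$ be positive numbers with $\alpha_a^{\rm LB}(\mu)\le\alpha_a(\mu)$,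 $\gamma_a(\mu)\le\gamma_a^{\rm UB}(\mu)$, $\beta^{\rm LB}(\mu)\le\beta(\mu)$, $\gamma_m(\mu)\le\gamma_m^{\rm UB}(\mu)$. Define \[ \Delta^{{\rm sym},k}_N(\mu)=\Bigg[\Delta t\sum_{j=1}^k\frac{\|r^{1,j}_N(\cdot;\mu)\|^2_{X'}}{\alpha_a^{\rm LB}(\mu)}+\frac{2}{\beta^{\rm LB}(\mu)}\Big(1+\sqrt{\frac{\gamma_a^{\rm UB}(\mu)}{\alpha_a^{\rm LB}(\mu)}}\Big)\|r^{1,j}_N(\cdot;\mu)\|_{X'}\|r^{2,j}_N(\cdot;\mu)\|_{Y'} \] \[ +\Big(\frac{\gamma_m^{\rm UB}(\mu)}{\Delta t}+\gamma_a^{\rm UB}(\mu)\Big)\frac{\|r^{2,j}_N(\cdot;\mu)\|^2_{Y'}}{(\beta^{\rm LB}(\mu))^2}\Bigg]^{1/2}. \] Then \[ \Big(\|e^{u,k}_N(\mu)\|_\mu^2+\Delta t\sum_{j=1}^k\|e^{u,j}_N(\mu)\|^2_{X,\mu}\Big)^{1/2}\le\Delta^{{\rm sym},k}_N(\mu). \]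
   Context: Here $\|v\|_\mu=\sqrt{m(v,v;\mu)}$ and $\|v\|_{X,\mu}=\sqrt{a(v,v;\mu)}$ for $v\in X$; $X'$, $Y'$ are the dual spaces with dual norms $\|r\|_{X'}=\sup_{0\ne v\in X}r(v)/\|v\|_X$ and $\|r\|_{Y'}=\sup_{0\ne q\in Y}r(q)/\|q\|_Y$. In the sum defining $\Delta^{{\rm sym},k}_N(\mu)$, all three terms are inside the sum over $j$ and multiplied by $\Delta t$. *)

theory Defs
  imports "HOL-Analysis.Analysis"
begin

definition cont_const :: "('x::real_normed_vector \<Rightarrow> 'x \<Rightarrow> real) \<Rightarrow> real" where
  "cont_const m = Sup {m u v / (norm u * norm v) | u v. u \<noteq> 0 \<and> v \<noteq> 0}"

definition coerc_const :: "('x::real_normed_vector \<Rightarrow> 'x \<Rightarrow> real) \<Rightarrow> real" where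
  "coerc_const a = Inf {a v v / (norm v)\<^sup>2 | v. v \<noteq> 0}"

definition infsup_const :: "('x::real_normed_vector \<Rightarrow> 'y::real_normed_vector \<Rightarrow> real) \<Rightarrow> real" where
  "infsup_const b = Inf {Sup {b v q / (norm q * norm v) | v. v \<noteq> 0} | q. q \<noteq> 0}"

definition dual_norm :: "('x::real_normed_vector \<Rightarrow> real) \<Rightarrow> real" where
  "dual_norm r = Sup {r v / norm v | v. v \<noteq> 0}"

end

theory Submission
  imports Defs
begin

lemma ex_nonzero: "\<exists>v::'x::euclidean_space. v \<noteq> 0"
  using nonempty_Basis by (metis ex_in_conv zero_not_in_Basis)

lemma dual_norm_bound:
  fixes r :: "'x::euclidean_space \<Rightarrow> real"
  assumes "linear r"
  shows "r v \<le> dual_norm r * norm v" and "dual_norm r \<ge> 0"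
proof -
  obtain B where B: "\<And>x. norm (r x) \<le> B * norm x"
    using linear_bounded_pos[OF assms] by metis
  let ?S = "{r v / norm v | v. v \<noteq> 0}"
  have bdd: "bdd_above ?S"
  proof (rule bdd_aboveI)
    fix y assume "y \<in> ?S"
    then obtain v where v: "v \<noteq> 0" "y = r v / norm v" by blast
    have "r v \<le> B * norm v" using B[of v] by auto
    then show "y \<le> B" using v by (simp add: divide_le_eq)
  qed
  have up: "r v / norm v \<le> dual_norm r" if "v \<noteq> 0" for v
    unfolding dual_norm_def by (rule cSup_upper[OF _ bdd]) (use that in blast)
  show "r v \<le> dual_norm r * norm v"
  proof (cases "v = 0")
    case True then show ?thesis using linear_0[OF assms] by simp
  next
    case False then show ?thesis using up[OF False] by (simp add: divide_le_eq mult.commute)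
  qed
  obtain w :: 'x where w: "w \<noteq> 0" using ex_nonzero by blast
  have "r (-w) = - r w" using linear_neg[OF assms] by simp
  then have "r w / norm w + r (-w) / norm (-w) = 0" by simp
  moreover have "r w / norm w \<le> dual_norm r" "r (-w) / norm (-w) \<le> dual_norm r"
    using up[of w] up[of "-w"] w by auto
  ultimately show "dual_norm r \<ge> 0" by linarith
qed

lemma coerc_bound:
  fixes a :: "'x::euclidean_space \<Rightarrow> 'x \<Rightarrow> real"
  assumes "bilinear a"
  shows "coerc_const a * (norm v)\<^sup>2 \<le> a v v"
proof (cases "v = 0")
  case True then show ?thesis using bilinear_lzero[OF assms] by simp
next
  case False
  obtain B where B: "\<And>x y. norm (a x y) \<le> B * norm x * norm y"
    using bilinear_bounded[OF assms] by blast
  let ?S = "{a v v / (norm v)\<^sup>2 | v. v \<noteq> 0}"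
  have bdd: "bdd_below ?S"
  proof (rule bdd_belowI)
    fix y assume "y \<in> ?S"
    then obtain v where v: "v \<noteq> 0" "y = a v v / (norm v)\<^sup>2" by blast
    have "- a v v \<le> B * (norm v)\<^sup>2" using B[of v v] by (auto simp: power2_eq_square)
    then show "- B \<le> y" using v by (simp add: le_divide_eq)
  qed
  have "coerc_const a \<le> a v v / (norm v)\<^sup>2"
    unfolding coerc_const_def by (rule cInf_lower[OF _ bdd]) (use False in blast)
  then show ?thesis using False by (simp add: le_divide_eq)
qed

lemma cont_bound:
  fixes a :: "'x::euclidean_space \<Rightarrow> 'x \<Rightarrow> real"
  assumes "bilinear a" and bdd: "bdd_above {a u v / (norm u * norm v) | u v. u \<noteq> 0 \<and> v \<noteq> 0}"
  shows "a v v \<le> cont_const a * (norm v)\<^sup>2"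
proof (cases "v = 0")
  case True then show ?thesis using bilinear_lzero[OF assms(1)] by simp
next
  case False
  have "a v v / (norm v * norm v) \<le> cont_const a"
    unfolding cont_const_def by (rule cSup_upper[OF _ bdd]) (use False in blast)
  then show ?thesis using False by (simp add: divide_le_eq power2_eq_square)
qed

lemma aux_div:
  fixes x nv nq t :: real
  assumes "x \<le> nv * t" "nv > 0" "nq > 0"
  shows "x / (nq * nv) \<le> t / nq"
proof -
  have e: "t / nq * (nq * nv) = nv * t" using assms by simp
  have "0 < nq * nv" using assms by simp
  then show ?thesis using assms(1) e by (simp add: pos_divide_le_eq)
qed

lemma infsup_lift:
  fixes b :: "'x::euclidean_space \<Rightarrow> 'y::euclidean_space \<Rightarrow> real" and r :: "'y \<Rightarrow> real"
  assumes bb: "bilinear b" and bpos: "infsup_const b > 0" and lr: "linear r"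
  shows "\<exists>w. (\<forall>q. b w q = r q) \<and> infsup_const b * norm w \<le> dual_norm r"
proof -
  define \<beta> where "\<beta> = infsup_const b"
  define T where "T q = adjoint (\<lambda>v. b v q) 1" for q
  have lq: "linear (\<lambda>v. b v q)" for q using bb unfolding bilinear_def by blast
  have lv: "linear (\<lambda>q. b v q)" for v using bb unfolding bilinear_def by blast
  have bT: "b v q = v \<bullet> T q" for v q
    unfolding T_def adjoint_works[OF lq] by simp
  have Tadd: "T (x + y) = T x + T y" for x y
    using vector_eq_ldot bT linear_add[OF lv] inner_add_right by metis
  have Tscale: "T (c *\<^sub>R x) = c *\<^sub>R T x" for c x
  proof -
    have "\<forall>v. v \<bullet> T (c *\<^sub>R x) = v \<bullet> (c *\<^sub>R T x)"
      using bT linear_scale[OF lv] by (metis inner_scaleR_right real_scaleR_def)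
    then show ?thesis using vector_eq_ldot by blast
  qed
  have lT: "linear T" by (rule linearI[OF Tadd Tscale])
  have Tlow: "\<beta> * norm q \<le> norm (T q)" for q
  proof (cases "q = 0")
    case True then show ?thesis by simp
  next
    case False
    let ?S = "\<lambda>q. {b v q / (norm q * norm v) | v. v \<noteq> 0}"
    have ub: "y \<le> norm (T q) / norm q" if "y \<in> ?S q" for y
    proof -
      obtain v where v: "v \<noteq> 0" "y = b v q / (norm q * norm v)" using \<open>y \<in> ?S q\<close> by blast
      have "b v q \<le> norm v * norm (T q)" using bT Cauchy_Schwarz_ineq2[of v "T q"] by auto
      then show ?thesis using v False by (simp add: aux_div)
    qed
    obtain w :: 'x where w: "w \<noteq> 0" using ex_nonzero by blast
    have ne: "?S q \<noteq> {}" using w by blast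
    have supS: "Sup (?S q) \<le> norm (T q) / norm q" by (rule cSup_least[OF ne ub])
    have nonneg: "Sup (?S q') \<ge> 0" for q'
    proof -
      have bd: "bdd_above (?S q')"
      proof (cases "q' = 0")
        case True then show ?thesis using bilinear_rzero[OF bb] by (auto intro: bdd_aboveI[of _ 0])
      next
        case False
        have "y \<le> norm (T q') / norm q'" if "y \<in> ?S q'" for y
        proof -
          obtain v where v: "v \<noteq> 0" "y = b v q' / (norm q' * norm v)" using \<open>y \<in> ?S q'\<close> by blast
          have "b v q' \<le> norm v * norm (T q')" using bT Cauchy_Schwarz_ineq2[of v "T q'"] by auto
          then show ?thesis using v False by (simp add: aux_div)
        qed
        then show ?thesis by (rule bdd_aboveI)
      qed
      have "b w q' / (norm q' * norm w) \<in> ?S q'" "b (-w) q' / (norm q' * norm (-w)) \<in> ?S q'"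
        using w by (blast, intro CollectI exI[of _ "-w"], simp)
      then have "b w q' / (norm q' * norm w) \<le> Sup (?S q')" "b (-w) q' / (norm q' * norm (-w)) \<le> Sup (?S q')"
        using cSup_upper[OF _ bd] by blast+
      moreover have "b (-w) q' = - b w q'" using bilinear_lneg[OF bb] by simp
      ultimately show ?thesis by (simp add: divide_minus_left)
    qed
    have bddb: "bdd_below {Sup (?S q') | q'. q' \<noteq> 0}"
      using nonneg by (auto intro: bdd_belowI[of _ 0])
    have "\<beta> \<le> Sup (?S q)"
      unfolding \<beta>_def infsup_const_def by (rule cInf_lower[OF _ bddb]) (use False in blast)
    with supS have "\<beta> \<le> norm (T q) / norm q" by linarith
    then show ?thesis using False by (simp add: le_divide_eq)
  qed
  define G where "G q = adjoint T (T q)" for q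
  have lG: "linear G" unfolding G_def
    using linear_compose[OF lT adjoint_linear[OF lT]] by (simp add: o_def)
  have GT: "q' \<bullet> G q = T q' \<bullet> T q" for q q' unfolding G_def adjoint_works[OF lT] ..
  have G0: "q = 0" if "G q = 0" for q
  proof -
    have "T q \<bullet> T q = 0" using GT[of q q] that by simp
    then have "norm (T q) = 0" by simp
    then have "\<beta> * norm q \<le> 0" using Tlow[of q] by simp
    then show "q = 0" using bpos \<beta>_def by (simp add: mult_le_0_iff)
  qed
  have "inj G"
  proof (rule injI)
    fix x y assume "G x = G y"
    then have "G (x - y) = 0" using linear_diff[OF lG] by simp
    then have "x - y = 0" by (rule G0)
    then show "x = y" by simp
  qed
  then have "surj G" using linear_injective_imp_surjective lG by blast
  define R where "R = adjoint r 1"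
  have rR: "r q = q \<bullet> R" for q unfolding R_def adjoint_works[OF lr] by simp
  obtain qs where qs: "G qs = R" using \<open>surj G\<close> by (metis surjD)
  define w where "w = T qs"
  have bw: "b w q = r q" for q
    unfolding w_def bT rR qs[symmetric] GT by (simp add: inner_commute)
  have "norm w ^ 2 = b w qs" unfolding bT w_def by (simp add: power2_norm_eq_inner)
  also have "\<dots> = r qs" by (rule bw)
  also have "\<dots> \<le> dual_norm r * norm qs" by (rule dual_norm_bound(1)[OF lr])
  finally have ww: "\<beta> * norm w ^ 2 \<le> dual_norm r * (\<beta> * norm qs)"
    using bpos \<beta>_def by (simp add: mult_left_mono mult.commute mult.left_commute)
  have "dual_norm r * (\<beta> * norm qs) \<le> dual_norm r * norm w"
    using Tlow[of qs] dual_norm_bound(2)[OF lr] w_def by (simp add: mult_left_mono)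
  with ww have "\<beta> * norm w * norm w \<le> dual_norm r * norm w" by (simp add: power2_eq_square mult.assoc)
  then have "\<beta> * norm w \<le> dual_norm r"
    using dual_norm_bound(2)[OF lr] by (cases "w = 0") (auto simp: mult_le_cancel_right)
  then show ?thesis using bw \<beta>_def by blast
qed

theorem proposition2p2:
  fixes D :: "(real^'n) set"
    and m a :: "real^'n \<Rightarrow> 'x::euclidean_space \<Rightarrow> 'x \<Rightarrow> real"
    and b :: "real^'n \<Rightarrow> 'x \<Rightarrow> 'y::euclidean_space \<Rightarrow> real"
    and f :: "nat \<Rightarrow> real^'n \<Rightarrow> 'x \<Rightarrow> real"
    and g :: "nat \<Rightarrow> real^'n \<Rightarrow> 'y \<Rightarrow> real"
    and K :: nat and dt :: real
    and u :: "real^'n \<Rightarrow> nat \<Rightarrow> 'x" and p :: "real^'n \<Rightarrow> nat \<Rightarrow> 'y"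
    and Nmax :: nat
    and XN :: "nat \<Rightarrow> 'x set" and YN :: "nat \<Rightarrow> 'y set"
    and uN :: "nat \<Rightarrow> real^'n \<Rightarrow> nat \<Rightarrow> 'x" and pN :: "nat \<Rightarrow> real^'n \<Rightarrow> nat \<Rightarrow> 'y"
    and \<mu> :: "real^'n" and N k :: nat
    and alphaLB gammaaUB betaLB gammamUB :: real
  assumes m_bil: "\<And>\<mu>. \<mu> \<in> D \<Longrightarrow> bilinear (m \<mu>)"
    and m_sym: "\<And>\<mu> u v. \<mu> \<in> D \<Longrightarrow> m \<mu> u v = m \<mu> v u"
    and m_pos: "\<And>\<mu> v. \<mu> \<in> D \<Longrightarrow> v \<noteq> 0 \<Longrightarrow> m \<mu> v v > 0"
    and a_bil: "\<And>\<mu>. \<mu> \<in> D \<Longrightarrow> bilinear (a \<mu>)"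
    and a_sym: "\<And>\<mu> u v. \<mu> \<in> D \<Longrightarrow> a \<mu> u v = a \<mu> v u"
    and b_bil: "\<And>\<mu>. \<mu> \<in> D \<Longrightarrow> bilinear (b \<mu>)"
    and gm_fin: "\<And>\<mu>. \<mu> \<in> D \<Longrightarrow> bdd_above {m \<mu> u v / (norm u * norm v) | u v. u \<noteq> 0 \<and> v \<noteq> 0}"
    and ga_fin: "\<And>\<mu>. \<mu> \<in> D \<Longrightarrow> bdd_above {a \<mu> u v / (norm u * norm v) | u v. u \<noteq> 0 \<and> v \<noteq> 0}"
    and alpha_pos: "\<And>\<mu>. \<mu> \<in> D \<Longrightarrow> coerc_const (a \<mu>) > 0"
    and beta_pos: "\<And>\<mu>. \<mu> \<in> D \<Longrightarrow> infsup_const (b \<mu>) > 0"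
    and dt_pos: "dt > 0"
    and f_lin: "\<And>k \<mu>. k \<in> {1..K} \<Longrightarrow> \<mu> \<in> D \<Longrightarrow> linear (f k \<mu>)"
    and g_lin: "\<And>k \<mu>. k \<in> {1..K} \<Longrightarrow> \<mu> \<in> D \<Longrightarrow> linear (g k \<mu>)"
    and u0: "\<And>\<mu>. \<mu> \<in> D \<Longrightarrow> u \<mu> 0 = 0"
    and u_eq1: "\<And>\<mu> k v. \<mu> \<in> D \<Longrightarrow> k \<in> {1..K} \<Longrightarrow>
        (1 / dt) * m \<mu> (u \<mu> k - u \<mu> (k - 1)) v + a \<mu> (u \<mu> k) v + b \<mu> v (p \<mu> k) = f k \<mu> v"
    and u_eq2: "\<And>\<mu> k q. \<mu> \<in> D \<Longrightarrow> k \<in> {1..K} \<Longrightarrow> b \<mu> (u \<mu> k) q = g k \<mu> q"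
    and XN_sub: "\<And>N. N \<in> {1..Nmax} \<Longrightarrow> subspace (XN N)"
    and YN_sub: "\<And>N. N \<in> {1..Nmax} \<Longrightarrow> subspace (YN N)"
    and uN_in: "\<And>N \<mu> k. N \<in> {1..Nmax} \<Longrightarrow> \<mu> \<in> D \<Longrightarrow> k \<in> {1..K} \<Longrightarrow> uN N \<mu> k \<in> XN N"
    and pN_in: "\<And>N \<mu> k. N \<in> {1..Nmax} \<Longrightarrow> \<mu> \<in> D \<Longrightarrow> k \<in> {1..K} \<Longrightarrow> pN N \<mu> k \<in> YN N"
    and uN0: "\<And>N \<mu>. N \<in> {1..Nmax} \<Longrightarrow> \<mu> \<in> D \<Longrightarrow> uN N \<mu> 0 = 0"
    and uN_eq1: "\<And>N \<mu> k v. N \<in> {1..Nmax} \<Longrightarrow> \<mu> \<in> D \<Longrightarrow> k \<in> {1..K} \<Longrightarrow> v \<in> XN N \<Longrightarrow>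
        (1 / dt) * m \<mu> (uN N \<mu> k - uN N \<mu> (k - 1)) v + a \<mu> (uN N \<mu> k) v + b \<mu> v (pN N \<mu> k)
          = f k \<mu> v"
    and uN_eq2: "\<And>N \<mu> k q. N \<in> {1..Nmax} \<Longrightarrow> \<mu> \<in> D \<Longrightarrow> k \<in> {1..K} \<Longrightarrow> q \<in> YN N \<Longrightarrow>
        b \<mu> (uN N \<mu> k) q = g k \<mu> q"
    and mu_in: "\<mu> \<in> D" and N_in: "N \<in> {1..Nmax}" and k_in: "k \<in> {1..K}"
    and alphaLB_pos: "alphaLB > 0" and gammaaUB_pos: "gammaaUB > 0"
    and betaLB_pos: "betaLB > 0" and gammamUB_pos: "gammamUB > 0"
    and alphaLB_le: "alphaLB \<le> coerc_const (a \<mu>)"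
    and gammaaUB_ge: "cont_const (a \<mu>) \<le> gammaaUB"
    and betaLB_le: "betaLB \<le> infsup_const (b \<mu>)"
    and gammamUB_ge: "cont_const (m \<mu>) \<le> gammamUB"
  shows "(let r1 = (\<lambda>j v. f j \<mu> v - (1 / dt) * m \<mu> (uN N \<mu> j - uN N \<mu> (j - 1)) v
                         - a \<mu> (uN N \<mu> j) v - b \<mu> v (pN N \<mu> j));
              r2 = (\<lambda>j q. g j \<mu> q - b \<mu> (uN N \<mu> j) q);
              e = (\<lambda>j. u \<mu> j - uN N \<mu> j);
              Delta = sqrt (dt * (\<Sum>j = 1..k.
                   (dual_norm (r1 j))\<^sup>2 / alphaLB
                 + 2 / betaLB * (1 + sqrt (gammaaUB / alphaLB)) * dual_norm (r1 j) * dual_norm (r2 j)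
                 + (gammamUB / dt + gammaaUB) * (dual_norm (r2 j))\<^sup>2 / betaLB\<^sup>2))
          in sqrt (m \<mu> (e k) (e k) + dt * (\<Sum>j = 1..k. a \<mu> (e j) (e j))) \<le> Delta)"
proof -
  define r1 where "r1 = (\<lambda>j v. f j \<mu> v - (1 / dt) * m \<mu> (uN N \<mu> j - uN N \<mu> (j - 1)) v
                         - a \<mu> (uN N \<mu> j) v - b \<mu> v (pN N \<mu> j))"
  define r2 where "r2 = (\<lambda>j q. g j \<mu> q - b \<mu> (uN N \<mu> j) q)"
  define e where "e = (\<lambda>j. u \<mu> j - uN N \<mu> j)"
  define S where "S = (\<lambda>j. (dual_norm (r1 j))\<^sup>2 / alphaLB
                 + 2 / betaLB * (1 + sqrt (gammaaUB / alphaLB)) * dual_norm (r1 j) * dual_norm (r2 j)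
                 + (gammamUB / dt + gammaaUB) * (dual_norm (r2 j))\<^sup>2 / betaLB\<^sup>2)"
  have mb: "bilinear (m \<mu>)" using m_bil mu_in by blast
  have ab: "bilinear (a \<mu>)" using a_bil mu_in by blast
  have bb: "bilinear (b \<mu>)" using b_bil mu_in by blast
  have kK: "k \<le> K" using k_in by simp
  have step: "m \<mu> (e j) (e j) - m \<mu> (e (j - 1)) (e (j - 1)) + dt * a \<mu> (e j) (e j) \<le> dt * S j"
    if jk: "j \<in> {1..k}" for j
  proof -
    have jK: "j \<in> {1..K}" using jk kK by auto
    have fl: "linear (f j \<mu>)" using f_lin jK mu_in by blast
    have gl: "linear (g j \<mu>)" using g_lin jK mu_in by blast
    have l1: "linear (r1 j)"
    proof (rule linearI)
      fix x y show "r1 j (x + y) = r1 j x + r1 j y"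
        unfolding r1_def using linear_add[OF fl] bilinear_radd[OF mb] bilinear_radd[OF ab] bilinear_ladd[OF bb]
        by (simp add: algebra_simps)
    next
      fix c x show "r1 j (c *\<^sub>R x) = c *\<^sub>R r1 j x"
        unfolding r1_def using linear_scale[OF fl] bilinear_rmul[OF mb] bilinear_rmul[OF ab] bilinear_lmul[OF bb]
        by (simp add: algebra_simps)
    qed
    have l2: "linear (r2 j)"
    proof (rule linearI)
      fix x y show "r2 j (x + y) = r2 j x + r2 j y"
        unfolding r2_def using linear_add[OF gl] bilinear_radd[OF bb]
        by (simp add: algebra_simps)
    next
      fix c x show "r2 j (c *\<^sub>R x) = c *\<^sub>R r2 j x"
        unfolding r2_def using linear_scale[OF gl] bilinear_rmul[OF bb]
        by (simp add: algebra_simps)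
    qed
    define E where "E = e j"
    define E0 where "E0 = e (j - 1)"
    define P where "P = p \<mu> j - pN N \<mu> j"
    have err1: "r1 j v = (1/dt) * m \<mu> (E - E0) v + a \<mu> E v + b \<mu> v P" for v
    proof -
      have hf: "f j \<mu> v = (1 / dt) * m \<mu> (u \<mu> j - u \<mu> (j - 1)) v + a \<mu> (u \<mu> j) v + b \<mu> v (p \<mu> j)"
        using u_eq1[OF mu_in jK] by simp
      have "E - E0 = (u \<mu> j - u \<mu> (j - 1)) - (uN N \<mu> j - uN N \<mu> (j - 1))"
        unfolding E_def E0_def e_def by (simp add: algebra_simps)
      then have hm: "m \<mu> (E - E0) v = m \<mu> (u \<mu> j - u \<mu> (j - 1)) v - m \<mu> (uN N \<mu> j - uN N \<mu> (j - 1)) v"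
        by (simp only: bilinear_lsub[OF mb])
      have ha: "a \<mu> E v = a \<mu> (u \<mu> j) v - a \<mu> (uN N \<mu> j) v"
        unfolding E_def e_def by (rule bilinear_lsub[OF ab])
      have hb: "b \<mu> v P = b \<mu> v (p \<mu> j) - b \<mu> v (pN N \<mu> j)"
        unfolding P_def by (rule bilinear_rsub[OF bb])
      show ?thesis unfolding r1_def hm ha hb hf right_diff_distrib by linarith
    qed
    have err2: "r2 j q = b \<mu> E q" for q
      unfolding r2_def E_def e_def using u_eq2[OF mu_in jK] bilinear_lsub[OF bb] by simp
    obtain W where W: "\<And>q. b \<mu> W q = r2 j q" and Wn: "infsup_const (b \<mu>) * norm W \<le> dual_norm (r2 j)"
      using infsup_lift[OF bb beta_pos[OF mu_in] l2] by blast
    have "b \<mu> (E - W) P = 0" using bilinear_lsub[OF bb] W err2 by simp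
    then have F1: "r1 j (E - W) = (1/dt) * m \<mu> (E - E0) (E - W) + a \<mu> E (E - W)"
      using err1 by simp
    have Mnn: "m \<mu> x x \<ge> 0" for x using m_pos[OF mu_in, of x] bilinear_lzero[OF mb] by (cases "x = 0") auto
    have F2: "2 * m \<mu> (E - E0) (E - W) \<ge> m \<mu> E E - m \<mu> E0 E0 - m \<mu> W W"
    proof -
      have "m \<mu> (E - E0 - W) (E - E0 - W) \<ge> 0" by (rule Mnn)
      moreover have "m \<mu> E0 E = m \<mu> E E0" "m \<mu> W E = m \<mu> E W" "m \<mu> W E0 = m \<mu> E0 W"
        using m_sym[OF mu_in] by auto
      ultimately show ?thesis
        by (simp add: bilinear_lsub[OF mb] bilinear_rsub[OF mb] bilinear_ladd[OF mb] bilinear_radd[OF mb] algebra_simps)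
    qed
    have F3: "2 * a \<mu> E (E - W) = a \<mu> E E + a \<mu> (E - W) (E - W) - a \<mu> W W"
    proof -
      have "a \<mu> W E = a \<mu> E W" using a_sym[OF mu_in] by auto
      then show ?thesis by (simp add: bilinear_lsub[OF ab] bilinear_rsub[OF ab] algebra_simps)
    qed
    define d1 where "d1 = dual_norm (r1 j)"
    define d2 where "d2 = dual_norm (r2 j)"
    have d1nn: "d1 \<ge> 0" and d2nn: "d2 \<ge> 0"
      using dual_norm_bound(2)[OF l1] dual_norm_bound(2)[OF l2] d1_def d2_def by auto
    define x where "x = norm (E - W)"
    have F4: "r1 j (E - W) \<le> d1 * x" unfolding d1_def x_def by (rule dual_norm_bound(1)[OF l1])
    have F5a: "alphaLB * x\<^sup>2 \<le> a \<mu> (E - W) (E - W)"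
    proof -
      have "alphaLB * x\<^sup>2 \<le> coerc_const (a \<mu>) * x\<^sup>2" using alphaLB_le by (simp add: mult_right_mono)
      then show ?thesis using coerc_bound[OF ab, of "E - W"] unfolding x_def by linarith
    qed
    have F5b: "2 * (d1 * x) \<le> alphaLB * x\<^sup>2 + d1\<^sup>2 / alphaLB"
    proof -
      have "0 \<le> (alphaLB * x - d1)\<^sup>2 / alphaLB" using alphaLB_pos by simp
      also have "(alphaLB * x - d1)\<^sup>2 / alphaLB = alphaLB * x\<^sup>2 + d1\<^sup>2 / alphaLB - 2 * (d1 * x)"
        using alphaLB_pos by (simp add: power2_eq_square field_simps)
      finally show ?thesis by simp
    qed
    have key: "m \<mu> E E - m \<mu> E0 E0 + dt * a \<mu> E E \<le> m \<mu> W W + dt * a \<mu> W W + dt * (d1\<^sup>2 / alphaLB)"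
    proof -
      have "2 * dt * r1 j (E - W) = 2 * m \<mu> (E - E0) (E - W) + dt * (2 * a \<mu> E (E - W))"
        using F1 dt_pos by (simp add: field_simps)
      moreover have "2 * dt * r1 j (E - W) \<le> dt * (a \<mu> (E - W) (E - W) + d1\<^sup>2 / alphaLB)"
      proof -
        have "2 * r1 j (E - W) \<le> a \<mu> (E - W) (E - W) + d1\<^sup>2 / alphaLB" using F4 F5a F5b by linarith
        then show ?thesis using dt_pos by (simp add: mult_left_mono)
      qed
      ultimately have "2 * m \<mu> (E - E0) (E - W) + dt * (2 * a \<mu> E (E - W))
          \<le> dt * (a \<mu> (E - W) (E - W) + d1\<^sup>2 / alphaLB)" by simp
      then show ?thesis using F2 F3 by (simp add: algebra_simps)
    qed
    define y where "y = norm W"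
    have ynn: "y \<ge> 0" unfolding y_def by simp
    have F6m: "m \<mu> W W \<le> gammamUB * y\<^sup>2"
    proof -
      have "cont_const (m \<mu>) * y\<^sup>2 \<le> gammamUB * y\<^sup>2" by (rule mult_right_mono[OF gammamUB_ge]) simp
      then show ?thesis using cont_bound[OF mb gm_fin[OF mu_in], of W] unfolding y_def by linarith
    qed
    have F6a: "a \<mu> W W \<le> gammaaUB * y\<^sup>2"
    proof -
      have "cont_const (a \<mu>) * y\<^sup>2 \<le> gammaaUB * y\<^sup>2" by (rule mult_right_mono[OF gammaaUB_ge]) simp
      then show ?thesis using cont_bound[OF ab ga_fin[OF mu_in], of W] unfolding y_def by linarith
    qed
    have F7: "y\<^sup>2 \<le> d2\<^sup>2 / betaLB\<^sup>2"
    proof -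
      have "betaLB * y \<le> infsup_const (b \<mu>) * y" using betaLB_le ynn by (simp add: mult_right_mono)
      then have "betaLB * y \<le> d2" using Wn unfolding y_def d2_def by linarith
      then have "(betaLB * y)\<^sup>2 \<le> d2\<^sup>2" using betaLB_pos ynn by (simp add: power_mono)
      then show ?thesis using betaLB_pos by (simp add: le_divide_eq power_mult_distrib mult.commute)
    qed
    have cross: "0 \<le> 2 / betaLB * (1 + sqrt (gammaaUB / alphaLB)) * d1 * d2"
    proof -
      have "0 \<le> sqrt (gammaaUB / alphaLB)" using gammaaUB_pos alphaLB_pos by simp
      then have "0 \<le> 2 / betaLB * (1 + sqrt (gammaaUB / alphaLB))" using betaLB_pos by simp
      then show ?thesis using d1nn d2nn by (metis mult_nonneg_nonneg)
    qed
    have "m \<mu> W W + dt * a \<mu> W W \<le> (gammamUB + dt * gammaaUB) * (d2\<^sup>2 / betaLB\<^sup>2)"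
    proof -
      have "m \<mu> W W + dt * a \<mu> W W \<le> (gammamUB + dt * gammaaUB) * y\<^sup>2"
      proof -
        have "dt * a \<mu> W W \<le> dt * (gammaaUB * y\<^sup>2)" using F6a dt_pos by (simp add: mult_left_mono)
        then show ?thesis using F6m by (simp add: algebra_simps)
      qed
      also have "\<dots> \<le> (gammamUB + dt * gammaaUB) * (d2\<^sup>2 / betaLB\<^sup>2)"
        using F7 gammamUB_pos gammaaUB_pos dt_pos by (intro mult_left_mono) simp_all
      finally show ?thesis .
    qed
    moreover have "dt * S j = dt * (d1\<^sup>2 / alphaLB) + dt * (2 / betaLB * (1 + sqrt (gammaaUB / alphaLB)) * d1 * d2)
        + (gammamUB + dt * gammaaUB) * (d2\<^sup>2 / betaLB\<^sup>2)"
      unfolding S_def d1_def d2_def using dt_pos betaLB_pos alphaLB_pos by (simp add: field_simps)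
    moreover have "0 \<le> dt * (2 / betaLB * (1 + sqrt (gammaaUB / alphaLB)) * d1 * d2)"
      using cross dt_pos by (metis mult_nonneg_nonneg less_imp_le)
    ultimately show ?thesis using key unfolding E_def E0_def by linarith
  qed
  have e0: "e 0 = 0" unfolding e_def using u0[OF mu_in] uN0[OF N_in mu_in] by simp
  have ind: "k' \<le> k \<Longrightarrow> m \<mu> (e k') (e k') + dt * (\<Sum>j = 1..k'. a \<mu> (e j) (e j)) \<le> dt * (\<Sum>j = 1..k'. S j)" for k'
  proof (induction k')
    case 0 then show ?case using e0 bilinear_lzero[OF mb] by simp
  next
    case (Suc n)
    then have IH: "m \<mu> (e n) (e n) + dt * (\<Sum>j = 1..n. a \<mu> (e j) (e j)) \<le> dt * (\<Sum>j = 1..n. S j)" by simp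
    have "Suc n \<in> {1..k}" using Suc.prems by simp
    from step[OF this] have "m \<mu> (e (Suc n)) (e (Suc n)) - m \<mu> (e n) (e n) + dt * a \<mu> (e (Suc n)) (e (Suc n)) \<le> dt * S (Suc n)"
      by simp
    with IH show ?case by (simp add: sum.cl_ivl_Suc algebra_simps)
  qed
  have goal: "sqrt (m \<mu> (e k) (e k) + dt * (\<Sum>j = 1..k. a \<mu> (e j) (e j))) \<le> sqrt (dt * (\<Sum>j = 1..k. S j))"
    using ind[of k] by simp
  show ?thesis using goal unfolding Let_def r1_def r2_def e_def S_def by simp
qed

end
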